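(* Let $Q\in\mathbb{R}^{n\times n}$ be symmetric and let $F\in\mathbb{R}^{n\times k}$ have rows $f_1,\dots,f_n$ with $\|f_i\|=1$ for all $i$; put $X=FF^T$. Let $D\in\mathbb{R}^{n\times k}$ have rows $d_1,\dots,d_n$ with $\langle f_i,d_i\rangle=0$ for all $i$. For $t\ge0$ let $F(t)$ be the matrix with rows $(f_i+td_i)/\|f_i+td_i\|$, $X(t)=F(t)F(t)^T$, and \[ \Phi(t)=\frac{2}{\pi}\langle Q,\arcsin X(t)\rangle. \] Then the one-sided directional derivative $G_D=\lim_{t\to0^+}\frac{\Phi(t)-\Phi(0)}{t}$ exists and equals \[ G_D=2\sum_{i<j}Q_{ij}\mu_{ij},\qquad \mu_{ij}=\begin{cases}\dfrac{2}{\pi}\dfrac{\langle f_i,d_j\rangle+\langle f_j,d_i\rangle}{\sqrt{1-X_{ij}^2}}, & X_{ij}\in(-1,1),\\[2ex] \dfrac{2}{\pi}\|d_i+d_j\|, & X_{ij}=-1,\\[1ex] -\dfrac{2}{\pi}\|d_i-d_j\|, & X_{ij}=1.\end{cases} \] Moreover, as a function of $D$ (on the linear subspace $\{D:\langle f_i,d_i\rangle=0\ \forall i\}$), $G_D$ is the sum of a linear function $2\sum_{i<j,\,|X_{ij}|<1}Q_{ij}\mu_{ij}$, a nonpositive concave positively homogeneous function $2\sum_{i<j,\,X_{ij}=\operatorname{sgn}Q_{ij}}Q_{ij}\mu_{ij}$, and a nonnegative convex positively homogeneous function $2\sum_{i<j,\,X_{ij}=-\operatorname{sgn}Q_{ij}}Q_{ij}\mu_{ij}$;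 in particular $D\mapsto G_D$ is a difference of convex functions.
   Context: $\arcsin$ is applied entrywise to matrices (values in $[-\pi/2,\pi/2]$), $\langle A,B\rangle=\sum_{i,j}A_{ij}B_{ij}$ for matrices and the standard inner product for vectors, $\|\cdot\|$ is the Euclidean norm, and $\operatorname{sgn}$ is the sign function (pairs with $Q_{ij}=0$ contribute zero). *)

theory Defs
  imports "HOL-Analysis.Analysis"
begin

text \<open>Matrices in R^(n x k) are rendered as real^'k^'n: row i of F is F$i.\<close>

definition gram :: "real^'k^'n \<Rightarrow> real^'n^'n" where
  "gram F = F ** transpose F"

definition Fpath :: "real^'k^'n \<Rightarrow> real^'k^'n \<Rightarrow> real \<Rightarrow> real^'k^'n" where
  "Fpath F D t = (\<chi> i. (1 / norm (F$i + t *\<^sub>R D$i)) *\<^sub>R (F$i + t *\<^sub>R D$i))"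

definition Phi :: "real^'n^'n \<Rightarrow> real^'k^'n \<Rightarrow> real^'k^'n \<Rightarrow> real \<Rightarrow> real" where
  "Phi Q F D t = 2 / pi * (\<Sum>i\<in>UNIV. \<Sum>j\<in>UNIV. Q$i$j * arcsin (gram (Fpath F D t) $i$j))"

definition mu :: "real^'k^'n \<Rightarrow> real^'k^'n \<Rightarrow> 'n \<Rightarrow> 'n \<Rightarrow> real" where
  "mu F D i j =
     (let x = gram F $i$j in
      if -1 < x \<and> x < 1 then 2 / pi * (F$i \<bullet> D$j + F$j \<bullet> D$i) / sqrt (1 - x\<^sup>2)
      else if x = -1 then 2 / pi * norm (D$i + D$j)
      else if x = 1 then - (2 / pi) * norm (D$i - D$j)
      else 0)"

definition Gpart :: "(real \<Rightarrow> real \<Rightarrow> bool) \<Rightarrow> real^('n::{finite,linorder})^('n::{finite,linorder}) \<Rightarrow> real^'k::finite^'n::{finite,linorder} \<Rightarrow> real^'k::finite^'n::{finite,linorder} \<Rightarrow> real"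
  where
  "Gpart P Q F D = 2 * (\<Sum>(i,j)\<in>{(i, j). i < j \<and> P (gram F $i$j) (Q$i$j)}.
                           Q$i$j * mu F D i j)"

definition GD :: "real^('n::{finite,linorder})^('n::{finite,linorder}) \<Rightarrow> real^'k::finite^'n::{finite,linorder} \<Rightarrow> real^'k::finite^'n::{finite,linorder} \<Rightarrow> real" where
  "GD Q F D = 2 * (\<Sum>(i,j)\<in>{(i, j). i < j}. Q$i$j * mu F D i j)"

definition tangent_space :: "real^'k^'n \<Rightarrow> (real^'k^'n) set" where
  "tangent_space F = {D. \<forall>i. F$i \<bullet> D$i = 0}"

end

theory Submission
  imports Defs
begin


lemma norm_path_sq:
  fixes f a :: "'a::real_inner"
  assumes "norm f = 1" "f \<bullet> a = 0"
  shows "norm (f + t *\<^sub>R a) ^ 2 = 1 + t^2 * norm a ^ 2"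
proof -
  have "norm (f + t *\<^sub>R a) ^ 2 = (f + t *\<^sub>R a) \<bullet> (f + t *\<^sub>R a)" by (simp add: power2_norm_eq_inner)
  also have "\<dots> = f \<bullet> f + 2 * t * (f \<bullet> a) + t^2 * (a \<bullet> a)"
    by (simp add: inner_add_left inner_add_right inner_commute power2_eq_square algebra_simps)
  also have "\<dots> = 1 + t^2 * norm a ^ 2"
  proof -
    have "f \<bullet> f = 1" using assms(1) norm_eq_1 by blast
    moreover have "a \<bullet> a = norm a ^ 2" by (simp add: dot_square_norm)
    ultimately show ?thesis using assms(2) by simp
  qed
  finally show ?thesis .
qed

lemma norm_path_ge1:
  fixes f a :: "'a::real_inner"
  assumes "norm f = 1" "f \<bullet> a = 0"
  shows "norm (f + t *\<^sub>R a) \<ge> 1"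
proof -
  have "norm (f + t *\<^sub>R a) ^ 2 \<ge> 1 ^ 2" using norm_path_sq[OF assms, of t] by simp
  then show ?thesis by (rule power2_le_imp_le) simp
qed

lemma half_angle:
  fixes u v :: "'a::real_inner"
  assumes "norm u = 1" "norm v = 1"
  shows "arcsin (u \<bullet> v) = pi/2 - 2 * arcsin (norm (u - v) / 2)"
proof -
  define s where "s = norm (u - v) / 2"
  have s0: "s \<ge> 0" by (simp add: s_def)
  have "norm (u - v) \<le> norm u + norm v" by (rule norm_triangle_ineq4)
  then have s1: "s \<le> 1" using assms by (simp add: s_def)
  have "norm (u - v) ^ 2 = 2 - 2 * (u \<bullet> v)"
    using assms by (simp add: power2_norm_eq_inner inner_diff_left inner_diff_right inner_commute norm_eq_1)
  then have uv: "u \<bullet> v = 1 - 2 * s^2" by (simp add: s_def power_divide field_simps)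
  define th where "th = arcsin s"
  have sth: "sin th = s" using s0 s1 by (simp add: th_def)
  have th0: "th \<ge> 0" using arcsin_le_arcsin[of 0 s] s0 s1 unfolding th_def by simp
  have th1: "th \<le> pi/2" using arcsin_le_arcsin[of s 1] s0 s1 unfolding th_def by simp
  have "u \<bullet> v = cos (2 * th)" using uv sth by (simp add: cos_double_sin)
  also have "\<dots> = sin (pi/2 - 2 * th)" using cos_sin_eq[of "2*th"] by simp
  finally have "arcsin (u \<bullet> v) = arcsin (sin (pi/2 - 2 * th))" by simp
  also have "\<dots> = pi/2 - 2 * th" using th0 th1 by (intro arcsin_sin) auto
  finally show ?thesis unfolding th_def s_def .
qed

lemma recip_key:
  fixes N c t :: real
  assumes "N \<ge> 1" "N^2 = 1 + t^2 * c"
  shows "1 / N = 1 - (t * t * c) / (N * (1 + N))"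
proof -
  have pos: "N * (1 + N) > 0" using assms(1) by simp
  have "(1 - N * N) / (N * (1 + N)) = ((1 - N) * (1 + N)) / (N * (1 + N))" by (simp add: algebra_simps)
  also have "\<dots> = (1 - N) / N" using assms(1) by (intro nonzero_mult_divide_mult_cancel_right) simp
  also have "\<dots> = 1 / N - 1" using assms(1) by (simp add: diff_divide_distrib)
  finally have "1 / N - 1 = (1 - N * N) / (N * (1 + N))" by simp
  also have "1 - N * N = - (t * t * c)" using assms(2) by (simp add: power2_eq_square)
  finally show ?thesis by simp
qed

lemma arcsin_carath:
  "\<exists>g. (\<forall>z. arcsin z = g z * z) \<and> isCont g 0 \<and> g 0 = 1"
proof -
  have "DERIV arcsin 0 :> 1" using DERIV_arcsin[of 0] by simp
  then obtain g where "\<forall>z. arcsin z - arcsin 0 = g z * (z - 0)" "continuous (at 0) g" "g 0 = 1"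
    using DERIV_caratheodory_within[of arcsin 1 0 UNIV] by auto
  then show ?thesis by auto
qed

lemma bnd_lim:
  fixes f a b :: "'a::real_inner"
  assumes f1: "norm f = 1" and fa: "f \<bullet> a = 0" and fb: "f \<bullet> b = 0"
  shows "((\<lambda>t. (arcsin (((1 / norm (f + t *\<^sub>R a)) *\<^sub>R (f + t *\<^sub>R a)) \<bullet>
              ((1 / norm (f + t *\<^sub>R b)) *\<^sub>R (f + t *\<^sub>R b))) - pi/2) / t)
           \<longlongrightarrow> - norm (a - b)) (at_right 0)"
proof -
  define Na where "Na t = norm (f + t *\<^sub>R a)" for t
  define Nb where "Nb t = norm (f + t *\<^sub>R b)" for t
  have Na1: "Na t \<ge> 1" for t unfolding Na_def by (rule norm_path_ge1[OF f1 fa])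
  have Nb1: "Nb t \<ge> 1" for t unfolding Nb_def by (rule norm_path_ge1[OF f1 fb])
  have Na2: "Na t ^2 = 1 + t^2 * norm a^2" for t unfolding Na_def by (rule norm_path_sq[OF f1 fa])
  have Nb2: "Nb t ^2 = 1 + t^2 * norm b^2" for t unfolding Nb_def by (rule norm_path_sq[OF f1 fb])
  define h where "h t = (t * (norm b^2 / (Nb t * (1 + Nb t)) - norm a^2 / (Na t * (1 + Na t)))) *\<^sub>R f
      + (1 / Na t) *\<^sub>R a - (1 / Nb t) *\<^sub>R b" for t
  define u where "u t = (1 / Na t) *\<^sub>R (f + t *\<^sub>R a)" for t
  define v where "v t = (1 / Nb t) *\<^sub>R (f + t *\<^sub>R b)" for t
  have uv: "u t - v t = t *\<^sub>R h t" for t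
  proof -
    have ka: "1 / Na t = 1 - (t * t * norm a^2) / (Na t * (1 + Na t))" by (rule recip_key[OF Na1 Na2])
    have kb: "1 / Nb t = 1 - (t * t * norm b^2) / (Nb t * (1 + Nb t))" by (rule recip_key[OF Nb1 Nb2])
    have "u t - v t = (1 / Na t - 1 / Nb t) *\<^sub>R f + t *\<^sub>R ((1 / Na t) *\<^sub>R a - (1 / Nb t) *\<^sub>R b)"
      unfolding u_def v_def by (simp add: algebra_simps)
    also have "1 / Na t - 1 / Nb t = t * (t * (norm b^2 / (Nb t * (1 + Nb t)) - norm a^2 / (Na t * (1 + Na t))))"
      by (subst ka, subst kb) (simp add: algebra_simps)
    finally show ?thesis unfolding h_def by (simp add: scaleR_add_right scaleR_diff_right)
  qed
  have unit_u: "norm (u t) = 1" for t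
  proof -
    have "Na t \<noteq> 0" using Na1[of t] by simp
    then show ?thesis unfolding u_def Na_def by simp
  qed
  have unit_v: "norm (v t) = 1" for t
  proof -
    have "Nb t \<noteq> 0" using Nb1[of t] by simp
    then show ?thesis unfolding v_def Nb_def by simp
  qed
  obtain g where g0: "\<forall>z. arcsin z = g z * z" and g23: "isCont g 0" "g 0 = 1" using arcsin_carath by blast
  have g: "\<And>z. arcsin z = g z * z" "isCont g 0" "g 0 = 1" using g0 g23 by auto
  have eq: "(arcsin (u t \<bullet> v t) - pi/2) / t = - (g (t * norm (h t) / 2) * norm (h t))" if "t > 0" for t
  proof -
    have "norm (u t - v t) = t * norm (h t)" using uv[of t] that by simp
    then have "arcsin (u t \<bullet> v t) = pi/2 - 2 * arcsin (t * norm (h t) / 2)"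
      using half_angle[OF unit_u unit_v] by simp
    also have "arcsin (t * norm (h t) / 2) = g (t * norm (h t) / 2) * (t * norm (h t) / 2)" by (rule g(1))
    finally show ?thesis using that by (simp add: field_simps)
  qed
  have NaL: "(Na \<longlongrightarrow> 1) (at_right 0)"
  proof -
    have "((\<lambda>t. norm (f + t *\<^sub>R a)) \<longlongrightarrow> norm (f + 0 *\<^sub>R a)) (at_right 0)"
      by (intro tendsto_intros)
    then show ?thesis using f1 unfolding Na_def by simp
  qed
  have NbL: "(Nb \<longlongrightarrow> 1) (at_right 0)"
  proof -
    have "((\<lambda>t. norm (f + t *\<^sub>R b)) \<longlongrightarrow> norm (f + 0 *\<^sub>R b)) (at_right 0)"
      by (intro tendsto_intros)
    then show ?thesis using f1 unfolding Nb_def by simp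
  qed
  have "(h \<longlongrightarrow> (0 * (norm b^2 / (1 * (1 + 1)) - norm a^2 / (1 * (1 + 1)))) *\<^sub>R f
      + (1 / 1) *\<^sub>R a - (1 / 1) *\<^sub>R b) (at_right 0)"
    unfolding h_def[abs_def] by (intro tendsto_intros NaL NbL) auto
  then have hL: "(h \<longlongrightarrow> a - b) (at_right 0)" by simp
  have wL: "((\<lambda>t. t * norm (h t) / 2) \<longlongrightarrow> 0) (at_right 0)"
  proof -
    have "((\<lambda>t. t * norm (h t) / 2) \<longlongrightarrow> 0 * norm (a - b) / 2) (at_right 0)"
      by (intro tendsto_intros hL) simp_all
    then show ?thesis by simp
  qed
  have gL: "((\<lambda>t. g (t * norm (h t) / 2)) \<longlongrightarrow> 1) (at_right 0)"
    using isCont_tendsto_compose[OF g(2) wL] g(3) by simp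
  have "((\<lambda>t. - (g (t * norm (h t) / 2) * norm (h t))) \<longlongrightarrow> - (1 * norm (a - b))) (at_right 0)"
    by (intro tendsto_intros gL hL)
  then have lim: "((\<lambda>t. - (g (t * norm (h t) / 2) * norm (h t))) \<longlongrightarrow> - norm (a - b)) (at_right 0)"
    by simp
  have ev: "eventually (\<lambda>t. (arcsin (u t \<bullet> v t) - pi/2) / t = - (g (t * norm (h t) / 2) * norm (h t))) (at_right 0)"
    using eventually_at_right_less by (rule eventually_mono) (rule eq)
  have L: "((\<lambda>t. (arcsin (u t \<bullet> v t) - pi/2) / t) \<longlongrightarrow> - norm (a - b)) (at_right 0)"
    by (rule tendsto_cong[OF ev, THEN iffD2, OF lim])
  then show ?thesis unfolding u_def v_def Na_def Nb_def .
qed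

lemma norm_path_sqrt:
  fixes f a :: "'a::real_inner"
  assumes "norm f = 1" "f \<bullet> a = 0"
  shows "norm (f + t *\<^sub>R a) = sqrt (1 + t^2 * norm a ^ 2)"
  using arg_cong[OF norm_path_sq[OF assms, of t], of sqrt] by simp

lemma int_lim:
  fixes f g a b :: "'a::real_inner"
  assumes f1: "norm f = 1" and g1: "norm g = 1" and fa: "f \<bullet> a = 0" and gb: "g \<bullet> b = 0"
    and xl: "-1 < f \<bullet> g" and xu: "f \<bullet> g < 1"
  shows "((\<lambda>t. (arcsin (((1 / norm (f + t *\<^sub>R a)) *\<^sub>R (f + t *\<^sub>R a)) \<bullet>
              ((1 / norm (g + t *\<^sub>R b)) *\<^sub>R (g + t *\<^sub>R b))) - arcsin (f \<bullet> g)) / t)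
           \<longlongrightarrow> (f \<bullet> b + g \<bullet> a) / sqrt (1 - (f \<bullet> g)^2)) (at_right 0)"
proof -
  define x where "x = f \<bullet> g"
  define p where "p = f \<bullet> b + g \<bullet> a"
  define e where "e = a \<bullet> b"
  define A where "A = norm a ^ 2"
  define B where "B = norm b ^ 2"
  define P where "P t = (x + t * p + t^2 * e) / (sqrt (1 + t^2 * A) * sqrt (1 + t^2 * B))" for t
  have eqP: "((1 / norm (f + t *\<^sub>R a)) *\<^sub>R (f + t *\<^sub>R a)) \<bullet>
              ((1 / norm (g + t *\<^sub>R b)) *\<^sub>R (g + t *\<^sub>R b)) = P t" for t
  proof -
    have "(f + t *\<^sub>R a) \<bullet> (g + t *\<^sub>R b) = x + t * p + t^2 * e"
      unfolding x_def p_def e_def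
      by (simp add: inner_add_left inner_add_right inner_commute algebra_simps power2_eq_square)
    then show ?thesis
      unfolding P_def A_def B_def norm_path_sqrt[OF f1 fa] norm_path_sqrt[OF g1 gb]
      by simp
  qed
  have DP: "(P has_real_derivative p) (at 0)"
    unfolding P_def[abs_def] by (auto intro!: derivative_eq_intros)
  have P0: "P 0 = x" unfolding P_def by simp
  have DA: "DERIV arcsin (P 0) :> inverse (sqrt (1 - x^2))"
    unfolding P0 using xl xu x_def by (intro DERIV_arcsin) auto
  have "((\<lambda>t. arcsin (P t)) has_real_derivative inverse (sqrt (1 - x^2)) * p) (at 0)"
    by (rule DERIV_chain2[OF DA DP])
  then have "((\<lambda>t. arcsin (P t)) has_real_derivative inverse (sqrt (1 - x^2)) * p) (at_right 0)"
    by (rule has_field_derivative_at_within)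
  then have "((\<lambda>y. (arcsin (P y) - arcsin (P 0)) / (y - 0)) \<longlongrightarrow> inverse (sqrt (1 - x^2)) * p) (at_right 0)"
    by (simp only: has_field_derivative_iff)
  then have "((\<lambda>t. (arcsin (P t) - arcsin x) / t) \<longlongrightarrow> p / sqrt (1 - x^2)) (at_right 0)"
    by (simp add: P0 divide_inverse mult.commute)
  then show ?thesis unfolding eqP x_def p_def .
qed



lemma gram_entry: "gram M $ i $ j = M $ i \<bullet> M $ j"
  by (simp add: gram_def matrix_matrix_mult_def transpose_def inner_vec_def mult.commute)

lemma gram_abs_le:
  fixes F :: "real^'k^'n"
  assumes "\<forall>i. norm (F$i) = 1"
  shows "\<bar>gram F $ i $ j\<bar> \<le> 1"
  using Cauchy_Schwarz_ineq2[of "F$i" "F$j"] assms by (simp add: gram_entry)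

lemma mu_int:
  fixes F E :: "real^'k^'n"
  assumes "-1 < gram F $i$j" "gram F $i$j < 1"
  shows "mu F E i j = 2 / pi * (F$i \<bullet> E$j + F$j \<bullet> E$i) / sqrt (1 - (gram F $i$j)\<^sup>2)"
  using assms by (simp add: mu_def Let_def)

lemma mu_one:
  fixes F E :: "real^'k^'n"
  assumes "gram F $i$j = 1"
  shows "mu F E i j = - (2 / pi) * norm (E$i - E$j)"
  using assms by (simp add: mu_def Let_def)

lemma mu_mone:
  fixes F E :: "real^'k^'n"
  assumes "gram F $i$j = -1"
  shows "mu F E i j = 2 / pi * norm (E$i + E$j)"
  using assms by (simp add: mu_def Let_def)

lemma mu_sym:
  fixes F E :: "real^'k^'n"
  shows "mu F E i j = mu F E j i"
proof -
  have "gram F $ i $ j = gram F $ j $ i" by (simp add: gram_entry inner_commute)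
  then show ?thesis by (simp add: mu_def Let_def norm_minus_commute add.commute)
qed

lemma Gpart_alt:
  fixes Q :: "real^('n::{finite,linorder})^('n::{finite,linorder})" and F E :: "real^'k^('n::{finite,linorder})"
  shows "Gpart P Q F E = 2 * (\<Sum>(i,j)\<in>{(i,j). i < j}.
      if P (gram F $i$j) (Q$i$j) then Q$i$j * mu F E i j else 0)"
  unfolding Gpart_def
  by (rule arg_cong[where f = "\<lambda>x. 2 * x"], rule sum.mono_neutral_cong_left) (auto split: if_splits)

lemma sym_sum:
  fixes s :: "'n::{finite,linorder} \<Rightarrow> 'n \<Rightarrow> real"
  assumes "\<And>i j. s i j = s j i"
  shows "(\<Sum>i\<in>UNIV. \<Sum>j\<in>UNIV. if i = j then 0 else s i j) = 2 * (\<Sum>(i,j)\<in>{(i,j). i<j}. s i j)"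
proof -
  have split: "(if i = j then 0 else s i j) = (if i < j then s i j else 0) + (if j < i then s i j else 0)" for i j
    by (cases i j rule: linorder_cases) auto
  have "(\<Sum>i\<in>UNIV. \<Sum>j\<in>UNIV. if i = j then 0 else s i j)
     = (\<Sum>i\<in>UNIV. \<Sum>j\<in>UNIV. if i < j then s i j else 0) + (\<Sum>i\<in>UNIV. \<Sum>j\<in>UNIV. if j < i then s i j else 0)"
    by (simp only: split sum.distrib)
  also have "(\<Sum>i\<in>UNIV. \<Sum>j\<in>UNIV. if j < i then s i j else 0) = (\<Sum>j\<in>UNIV. \<Sum>i\<in>UNIV. if j < i then s i j else 0)"
    by (rule sum.swap)
  also have "\<dots> = (\<Sum>i\<in>UNIV. \<Sum>j\<in>UNIV. if i < j then s i j else 0)"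
    by (subst assms) (rule refl)
  also have "(\<Sum>i\<in>UNIV. \<Sum>j\<in>UNIV. if i < j then s i j else 0) = (\<Sum>(i,j)\<in>UNIV \<times> UNIV. if i < j then s i j else 0)"
    by (rule sum.cartesian_product)
  also have "\<dots> = (\<Sum>(i,j)\<in>{(i,j). i<j}. s i j)"
    by (rule sum.mono_neutral_cong_right) (auto split: if_splits)
  finally show ?thesis by simp
qed

lemma norm_comb_diff:
  fixes E1 E2 :: "real^'k^'n"
  assumes "u \<ge> 0" "v \<ge> 0"
  shows "norm ((u *\<^sub>R E1 + v *\<^sub>R E2)$i - (u *\<^sub>R E1 + v *\<^sub>R E2)$j) \<le> u * norm (E1$i - E1$j) + v * norm (E2$i - E2$j)"
proof -
  have "(u *\<^sub>R E1 + v *\<^sub>R E2)$i - (u *\<^sub>R E1 + v *\<^sub>R E2)$j = u *\<^sub>R (E1$i - E1$j) + v *\<^sub>R (E2$i - E2$j)"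
    by (simp add: algebra_simps)
  then show ?thesis using norm_triangle_ineq[of "u *\<^sub>R (E1$i - E1$j)" "v *\<^sub>R (E2$i - E2$j)"] assms by simp
qed

lemma norm_comb_add:
  fixes E1 E2 :: "real^'k^'n"
  assumes "u \<ge> 0" "v \<ge> 0"
  shows "norm ((u *\<^sub>R E1 + v *\<^sub>R E2)$i + (u *\<^sub>R E1 + v *\<^sub>R E2)$j) \<le> u * norm (E1$i + E1$j) + v * norm (E2$i + E2$j)"
proof -
  have "(u *\<^sub>R E1 + v *\<^sub>R E2)$i + (u *\<^sub>R E1 + v *\<^sub>R E2)$j = u *\<^sub>R (E1$i + E1$j) + v *\<^sub>R (E2$i + E2$j)"
    by (simp add: algebra_simps)
  then show ?thesis using norm_triangle_ineq[of "u *\<^sub>R (E1$i + E1$j)" "v *\<^sub>R (E2$i + E2$j)"] assms by simp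
qed

lemma norm_hom_diff:
  fixes E :: "real^'k^'n"
  assumes "c \<ge> 0"
  shows "norm ((c *\<^sub>R E)$i - (c *\<^sub>R E)$j) = c * norm (E$i - E$j)"
proof -
  have "(c *\<^sub>R E)$i - (c *\<^sub>R E)$j = c *\<^sub>R (E$i - E$j)" by (simp add: algebra_simps)
  then show ?thesis using assms by simp
qed

lemma norm_hom_add:
  fixes E :: "real^'k^'n"
  assumes "c \<ge> 0"
  shows "norm ((c *\<^sub>R E)$i + (c *\<^sub>R E)$j) = c * norm (E$i + E$j)"
proof -
  have "(c *\<^sub>R E)$i + (c *\<^sub>R E)$j = c *\<^sub>R (E$i + E$j)" by (simp add: algebra_simps)
  then show ?thesis using assms by simp
qed

lemma real_split3:
  fixes x q m :: real
  assumes "\<bar>x\<bar> \<le> 1"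
  shows "q * m = (if \<bar>x\<bar> < 1 then q * m else 0) + (if x = sgn q then q * m else 0)
                 + (if x = - sgn q then q * m else 0)"
proof (cases "q = 0")
  case True then show ?thesis by simp
next
  case False
  then have "sgn q = 1 \<or> sgn q = -1" by (simp add: sgn_if)
  then show ?thesis using assms by auto
qed

lemma Cc_nonpos:
  fixes F E :: "real^'k^'n"
  shows "(if gram F$i$j = sgn q then q * mu F E i j else 0) \<le> 0"
proof -
  consider "q > 0" | "q < 0" | "q = 0" by linarith
  then show ?thesis
  proof cases
    case 1 then show ?thesis by (auto simp: mu_one mult_nonneg_nonneg)
  next
    case 2 then show ?thesis by (auto simp: mu_mone intro!: divide_nonpos_pos mult_nonpos_nonneg)
  qed simp
qed

lemma Cv_nonneg:
  fixes F E :: "real^'k^'n"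
  shows "(if gram F$i$j = - sgn q then q * mu F E i j else 0) \<ge> 0"
proof -
  consider "q > 0" | "q < 0" | "q = 0" by linarith
  then show ?thesis
  proof cases
    case 1 then show ?thesis by (auto simp: mu_mone)
  next
    case 2 then show ?thesis by (auto simp: mu_one intro!: divide_nonpos_pos mult_nonpos_nonneg)
  qed simp
qed

lemma Cc_concave:
  fixes F E1 E2 :: "real^'k^'n"
  assumes "u \<ge> 0" "v \<ge> 0"
  shows "(if gram F$i$j = sgn q then q * mu F (u *\<^sub>R E1 + v *\<^sub>R E2) i j else 0)
     \<ge> u * (if gram F$i$j = sgn q then q * mu F E1 i j else 0) + v * (if gram F$i$j = sgn q then q * mu F E2 i j else 0)"
proof -
  consider "q > 0" | "q < 0" | "q = 0" by linarith
  then show ?thesis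
  proof cases
    case 1
    have "q * (2/pi) * norm ((u *\<^sub>R E1 + v *\<^sub>R E2)$i - (u *\<^sub>R E1 + v *\<^sub>R E2)$j)
       \<le> q * (2/pi) * (u * norm (E1$i - E1$j) + v * norm (E2$i - E2$j))"
      using 1 by (intro mult_left_mono norm_comb_diff assms) auto
    with 1 show ?thesis by (auto simp: mu_one algebra_simps)
  next
    case 2
    have "(- q) * (2/pi) * norm ((u *\<^sub>R E1 + v *\<^sub>R E2)$i + (u *\<^sub>R E1 + v *\<^sub>R E2)$j)
       \<le> (- q) * (2/pi) * (u * norm (E1$i + E1$j) + v * norm (E2$i + E2$j))"
      using 2 by (intro mult_left_mono norm_comb_add assms) (auto intro: divide_nonpos_pos)
    with 2 show ?thesis by (auto simp: mu_mone algebra_simps)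
  qed simp
qed

lemma Cv_convex:
  fixes F E1 E2 :: "real^'k^'n"
  assumes "u \<ge> 0" "v \<ge> 0"
  shows "(if gram F$i$j = - sgn q then q * mu F (u *\<^sub>R E1 + v *\<^sub>R E2) i j else 0)
     \<le> u * (if gram F$i$j = - sgn q then q * mu F E1 i j else 0) + v * (if gram F$i$j = - sgn q then q * mu F E2 i j else 0)"
proof -
  consider "q > 0" | "q < 0" | "q = 0" by linarith
  then show ?thesis
  proof cases
    case 1
    have "q * (2/pi) * norm ((u *\<^sub>R E1 + v *\<^sub>R E2)$i + (u *\<^sub>R E1 + v *\<^sub>R E2)$j)
       \<le> q * (2/pi) * (u * norm (E1$i + E1$j) + v * norm (E2$i + E2$j))"
      using 1 by (intro mult_left_mono norm_comb_add assms) auto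
    with 1 show ?thesis by (auto simp: mu_mone algebra_simps)
  next
    case 2
    have "(- q) * (2/pi) * norm ((u *\<^sub>R E1 + v *\<^sub>R E2)$i - (u *\<^sub>R E1 + v *\<^sub>R E2)$j)
       \<le> (- q) * (2/pi) * (u * norm (E1$i - E1$j) + v * norm (E2$i - E2$j))"
      using 2 by (intro mult_left_mono norm_comb_diff assms) (auto intro: divide_nonpos_pos)
    with 2 show ?thesis by (auto simp: mu_one algebra_simps)
  qed simp
qed

lemma bnd_hom:
  fixes F E :: "real^'k^'n"
  assumes "c \<ge> 0" "P \<Longrightarrow> q \<noteq> 0 \<Longrightarrow> \<bar>gram F$i$j\<bar> = 1"
  shows "(if P then q * mu F (c *\<^sub>R E) i j else 0) = c * (if P then q * mu F E i j else 0)"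
proof (cases "P \<and> q \<noteq> 0")
  case True
  then have "gram F$i$j = 1 \<or> gram F$i$j = -1" using assms(2) True by (cases "gram F$i$j \<ge> 0") auto
  then show ?thesis
  proof
    assume "gram F$i$j = 1" then show ?thesis using assms(1) True by (simp add: mu_one scaleR_diff_right[symmetric])
  next
    assume "gram F$i$j = -1" then show ?thesis using assms(1) True by (simp add: mu_mone scaleR_add_right[symmetric])
  qed
qed auto

lemma L_lin:
  fixes F E1 E2 :: "real^'k^'n"
  shows "(if \<bar>gram F$i$j\<bar> < 1 then q * mu F (a *\<^sub>R E1 + b *\<^sub>R E2) i j else 0)
     = a * (if \<bar>gram F$i$j\<bar> < 1 then q * mu F E1 i j else 0) + b * (if \<bar>gram F$i$j\<bar> < 1 then q * mu F E2 i j else 0)"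
proof (cases "\<bar>gram F$i$j\<bar> < 1")
  case True
  then have "-1 < gram F$i$j" "gram F$i$j < 1" by auto
  then show ?thesis using True
    by (simp add: mu_int inner_add_right algebra_simps add_divide_distrib diff_divide_distrib)
qed simp

lemma part2:
  fixes Q :: "real^('n::{finite,linorder})^('n::{finite,linorder})"
    and F :: "real^'k^('n::{finite,linorder})"
  assumes unitF: "\<forall>i. norm (F$i) = 1"
  shows "(let S = tangent_space F;
           L = Gpart (\<lambda>x q. \<bar>x\<bar> < 1) Q F;
           Cc = Gpart (\<lambda>x q. x = sgn q) Q F;
           Cv = Gpart (\<lambda>x q. x = - sgn q) Q F
       in (\<forall>E\<in>S. GD Q F E = L E + Cc E + Cv E)
        \<and> (\<forall>E1\<in>S. \<forall>E2\<in>S. \<forall>a b. L (a *\<^sub>R E1 + b *\<^sub>R E2) = a * L E1 + b * L E2)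
        \<and> (\<forall>E\<in>S. Cc E \<le> 0) \<and> concave_on S Cc
        \<and> (\<forall>E\<in>S. \<forall>c\<ge>0. Cc (c *\<^sub>R E) = c * Cc E)
        \<and> (\<forall>E\<in>S. Cv E \<ge> 0) \<and> convex_on S Cv
        \<and> (\<forall>E\<in>S. \<forall>c\<ge>0. Cv (c *\<^sub>R E) = c * Cv E)
        \<and> (\<exists>g h. convex_on S g \<and> convex_on S h \<and> (\<forall>E\<in>S. GD Q F E = g E - h E)))"
proof -
  define S where "S = tangent_space F"
  define L where "L = Gpart (\<lambda>x q. \<bar>x\<bar> < 1) Q F"
  define Cc where "Cc = Gpart (\<lambda>x q. x = sgn q) Q F"
  define Cv where "Cv = Gpart (\<lambda>x q. x = - sgn q) Q F"
  define A where "A = {(i::'n, j::'n). i < j}"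
  define tL where "tL E p = (case p of (i, j) \<Rightarrow> if \<bar>gram F$i$j\<bar> < 1 then Q$i$j * mu F E i j else 0)" for E p
  define tC where "tC E p = (case p of (i, j) \<Rightarrow> if gram F$i$j = sgn (Q$i$j) then Q$i$j * mu F E i j else 0)" for E p
  define tV where "tV E p = (case p of (i, j) \<Rightarrow> if gram F$i$j = - sgn (Q$i$j) then Q$i$j * mu F E i j else 0)" for E p
  have Ls: "L E = 2 * sum (tL E) A" for E
    unfolding L_def Gpart_alt A_def tL_def by (simp add: case_prod_beta')
  have Cs: "Cc E = 2 * sum (tC E) A" for E
    unfolding Cc_def Gpart_alt A_def tC_def by (simp add: case_prod_beta')
  have Vs: "Cv E = 2 * sum (tV E) A" for E
    unfolding Cv_def Gpart_alt A_def tV_def by (simp add: case_prod_beta')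
  have GDs: "GD Q F E = 2 * (\<Sum>p\<in>A. case p of (i, j) \<Rightarrow> Q$i$j * mu F E i j)" for E
    unfolding GD_def A_def by (simp add: case_prod_beta')
  have convS: "convex S"
    unfolding S_def tangent_space_def convex_def by (simp add: inner_add_right)
  have dec: "GD Q F E = L E + Cc E + Cv E" for E
  proof -
    have "(\<Sum>p\<in>A. case p of (i, j) \<Rightarrow> Q$i$j * mu F E i j) = (\<Sum>p\<in>A. tL E p + tC E p + tV E p)"
    proof (rule sum.cong[OF refl])
      fix p assume "p \<in> A"
      obtain i j where p: "p = (i, j)" by (cases p)
      show "(case p of (i, j) \<Rightarrow> Q$i$j * mu F E i j) = tL E p + tC E p + tV E p"
        unfolding p tL_def tC_def tV_def by (simp only: prod.case) (rule real_split3[OF gram_abs_le[OF unitF]])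
    qed
    then show ?thesis unfolding GDs Ls Cs Vs by (simp add: sum.distrib algebra_simps)
  qed
  have lin: "L (a *\<^sub>R E1 + b *\<^sub>R E2) = a * L E1 + b * L E2" for a b E1 E2
  proof -
    have "tL (a *\<^sub>R E1 + b *\<^sub>R E2) p = a * tL E1 p + b * tL E2 p" for p
      unfolding tL_def by (cases p) (simp only: prod.case L_lin)
    then show ?thesis unfolding Ls by (simp add: sum.distrib sum_distrib_left algebra_simps)
  qed
  have Cnp: "Cc E \<le> 0" for E
  proof -
    have "tC E p \<le> 0" for p unfolding tC_def by (cases p) (simp only: prod.case Cc_nonpos)
    then show ?thesis unfolding Cs by (simp add: sum_nonpos)
  qed
  have Vnn: "Cv E \<ge> 0" for E
  proof -
    have "tV E p \<ge> 0" for p unfolding tV_def by (cases p) (simp only: prod.case Cv_nonneg)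
    then show ?thesis unfolding Vs by (simp add: sum_nonneg)
  qed
  have Cconc: "Cc (u *\<^sub>R E1 + v *\<^sub>R E2) \<ge> u * Cc E1 + v * Cc E2" if "u \<ge> 0" "v \<ge> 0" for u v E1 E2
  proof -
    have "u * tC E1 p + v * tC E2 p \<le> tC (u *\<^sub>R E1 + v *\<^sub>R E2) p" for p
      unfolding tC_def by (cases p) (simp only: prod.case Cc_concave[OF that])
    then have "(\<Sum>p\<in>A. u * tC E1 p + v * tC E2 p) \<le> sum (tC (u *\<^sub>R E1 + v *\<^sub>R E2)) A"
      by (rule sum_mono)
    then have "u * sum (tC E1) A + v * sum (tC E2) A \<le> sum (tC (u *\<^sub>R E1 + v *\<^sub>R E2)) A"
      by (simp add: sum.distrib sum_distrib_left)
    then have "2 * (u * sum (tC E1) A + v * sum (tC E2) A) \<le> 2 * sum (tC (u *\<^sub>R E1 + v *\<^sub>R E2)) A"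
      by simp
    moreover have "u * (2 * sum (tC E1) A) + v * (2 * sum (tC E2) A) = 2 * (u * sum (tC E1) A + v * sum (tC E2) A)"
      by (simp add: algebra_simps)
    ultimately show ?thesis unfolding Cs by simp
  qed
  have Vconv: "Cv (u *\<^sub>R E1 + v *\<^sub>R E2) \<le> u * Cv E1 + v * Cv E2" if "u \<ge> 0" "v \<ge> 0" for u v E1 E2
  proof -
    have "tV (u *\<^sub>R E1 + v *\<^sub>R E2) p \<le> u * tV E1 p + v * tV E2 p" for p
      unfolding tV_def by (cases p) (simp only: prod.case Cv_convex[OF that])
    then have "sum (tV (u *\<^sub>R E1 + v *\<^sub>R E2)) A \<le> (\<Sum>p\<in>A. u * tV E1 p + v * tV E2 p)"
      by (rule sum_mono)
    then have "sum (tV (u *\<^sub>R E1 + v *\<^sub>R E2)) A \<le> u * sum (tV E1) A + v * sum (tV E2) A"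
      by (simp add: sum.distrib sum_distrib_left)
    then have "2 * sum (tV (u *\<^sub>R E1 + v *\<^sub>R E2)) A \<le> 2 * (u * sum (tV E1) A + v * sum (tV E2) A)"
      by simp
    moreover have "u * (2 * sum (tV E1) A) + v * (2 * sum (tV E2) A) = 2 * (u * sum (tV E1) A + v * sum (tV E2) A)"
      by (simp add: algebra_simps)
    ultimately show ?thesis unfolding Vs by simp
  qed
  have Chom: "Cc (c *\<^sub>R E) = c * Cc E" if "c \<ge> 0" for c E
  proof -
    have "tC (c *\<^sub>R E) p = c * tC E p" for p
      unfolding tC_def
      by (cases p) (simp only: prod.case, rule bnd_hom[OF that], auto simp: sgn_if split: if_splits)
    then show ?thesis unfolding Cs by (simp add: sum_distrib_left[symmetric])
  qed
  have Vhom: "Cv (c *\<^sub>R E) = c * Cv E" if "c \<ge> 0" for c E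
  proof -
    have "tV (c *\<^sub>R E) p = c * tV E p" for p
      unfolding tV_def
      by (cases p) (simp only: prod.case, rule bnd_hom[OF that], auto simp: sgn_if split: if_splits)
    then show ?thesis unfolding Vs by (simp add: sum_distrib_left[symmetric])
  qed
  have concC: "concave_on S Cc"
    unfolding concave_on_iff using convS Cconc by auto
  have convV: "convex_on S Cv"
    unfolding convex_on_def using convS Vconv by auto
  have convL: "convex_on S L"
    unfolding convex_on_def using convS lin by auto
  have DC: "\<exists>g h. convex_on S g \<and> convex_on S h \<and> (\<forall>E\<in>S. GD Q F E = g E - h E)"
  proof (intro exI conjI)
    show "convex_on S (\<lambda>E. L E + Cv E)" using convL convV by (rule convex_on_add)
    show "convex_on S (\<lambda>E. - Cc E)" using concC by (simp add: concave_on_def)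
    show "\<forall>E\<in>S. GD Q F E = L E + Cv E - - Cc E" using dec by simp
  qed
  show ?thesis
    unfolding Let_def S_def[symmetric] L_def[symmetric] Cc_def[symmetric] Cv_def[symmetric]
    using dec lin Cnp concC Chom Vnn convV Vhom DC by blast
qed



lemma unit_scaled:
  fixes f a :: "'a::real_inner"
  assumes "norm f = 1" "f \<bullet> a = 0"
  shows "norm ((1 / norm (f + t *\<^sub>R a)) *\<^sub>R (f + t *\<^sub>R a)) = 1"
proof -
  have "norm (f + t *\<^sub>R a) \<noteq> 0" using norm_path_ge1[OF assms, of t] by linarith
  then show ?thesis by simp
qed

lemma bnd_lim_neg:
  fixes f a b :: "'a::real_inner"
  assumes f1: "norm f = 1" and fa: "f \<bullet> a = 0" and fb: "f \<bullet> b = 0"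
  shows "((\<lambda>t. (arcsin (((1 / norm (f + t *\<^sub>R a)) *\<^sub>R (f + t *\<^sub>R a)) \<bullet>
              ((1 / norm (- f + t *\<^sub>R b)) *\<^sub>R (- f + t *\<^sub>R b))) - arcsin (-1)) / t)
           \<longlongrightarrow> norm (a + b)) (at_right 0)"
proof -
  have fb': "f \<bullet> (- b) = 0" using fb by simp
  define u where "u t = (1 / norm (f + t *\<^sub>R a)) *\<^sub>R (f + t *\<^sub>R a)" for t
  define v where "v t = (1 / norm (f + t *\<^sub>R (- b))) *\<^sub>R (f + t *\<^sub>R (- b))" for t
  have L: "((\<lambda>t. (arcsin (u t \<bullet> v t) - pi/2) / t) \<longlongrightarrow> - norm (a - - b)) (at_right 0)"
    unfolding u_def v_def by (rule bnd_lim[OF f1 fa fb'])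
  have eq: "(arcsin (((1 / norm (f + t *\<^sub>R a)) *\<^sub>R (f + t *\<^sub>R a)) \<bullet>
              ((1 / norm (- f + t *\<^sub>R b)) *\<^sub>R (- f + t *\<^sub>R b))) - arcsin (-1)) / t
        = - ((arcsin (u t \<bullet> v t) - pi/2) / t)" for t
  proof -
    have w: "- f + t *\<^sub>R b = - (f + t *\<^sub>R (- b))" by simp
    have nu: "norm (u t) = 1" unfolding u_def by (rule unit_scaled[OF f1 fa])
    have nv: "norm (v t) = 1" unfolding v_def by (rule unit_scaled[OF f1 fb'])
    have b1: "\<bar>u t \<bullet> v t\<bar> \<le> 1" using Cauchy_Schwarz_ineq2[of "u t" "v t"] nu nv by simp
    have "((1 / norm (f + t *\<^sub>R a)) *\<^sub>R (f + t *\<^sub>R a)) \<bullet>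
              ((1 / norm (- f + t *\<^sub>R b)) *\<^sub>R (- f + t *\<^sub>R b)) = - (u t \<bullet> v t)"
      unfolding w u_def v_def norm_minus_cancel by (simp only: scaleR_minus_right inner_minus_right)
    moreover have "arcsin (- (u t \<bullet> v t)) = - arcsin (u t \<bullet> v t)"
      using b1 by (intro arcsin_minus) auto
    moreover have "(- A - - (pi/2)) / t = - ((A - pi/2) / t)" for A :: real
      by (simp add: diff_divide_distrib)
    ultimately show ?thesis by simp
  qed
  have "((\<lambda>t. - ((arcsin (u t \<bullet> v t) - pi/2) / t)) \<longlongrightarrow> - (- norm (a - - b))) (at_right 0)"
    by (rule tendsto_minus[OF L])
  then show ?thesis unfolding eq by simp
qed

lemma term_lim:
  fixes F D :: "real^'k^'n"
  assumes unitF: "\<forall>i. norm (F$i) = 1" and orthD: "\<forall>i. F$i \<bullet> D$i = 0"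
  shows "((\<lambda>t. (arcsin (gram (Fpath F D t) $i$j) - arcsin (gram F $i$j)) / t)
           \<longlongrightarrow> (if i = j then 0 else pi/2 * mu F D i j)) (at_right 0)"
proof -
  have row: "Fpath F D t $ i = (1 / norm (F$i + t *\<^sub>R D$i)) *\<^sub>R (F$i + t *\<^sub>R D$i)" for t i
    by (simp add: Fpath_def)
  have gF: "gram (Fpath F D t) $i$j = ((1 / norm (F$i + t *\<^sub>R D$i)) *\<^sub>R (F$i + t *\<^sub>R D$i)) \<bullet>
      ((1 / norm (F$j + t *\<^sub>R D$j)) *\<^sub>R (F$j + t *\<^sub>R D$j))" for t
    by (simp add: gram_entry row)
  have ui: "norm (F$i) = 1" and uj: "norm (F$j) = 1" using unitF by auto
  have oi: "F$i \<bullet> D$i = 0" and oj: "F$j \<bullet> D$j = 0" using orthD by auto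
  have x: "gram F $i$j = F$i \<bullet> F$j" by (simp add: gram_entry)
  show ?thesis
  proof (cases "i = j")
    case True
    have "gram (Fpath F D t) $i$j = 1" for t
      unfolding gF unfolding True using unit_scaled[OF uj oj, of t] unfolding norm_eq_1 .
    moreover have "gram F $i$j = 1" unfolding x unfolding True using uj by (simp add: norm_eq_1)
    ultimately show ?thesis using True by simp
  next
    case False
    have xb: "\<bar>F$i \<bullet> F$j\<bar> \<le> 1" using Cauchy_Schwarz_ineq2[of "F$i" "F$j"] ui uj by simp
    have n2: "norm (F$i - F$j) ^ 2 = 2 - 2 * (F$i \<bullet> F$j)"
      using ui uj by (simp add: power2_norm_eq_inner inner_diff_left inner_diff_right inner_commute norm_eq_1)
    have n2': "norm (F$i + F$j) ^ 2 = 2 + 2 * (F$i \<bullet> F$j)"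
      using ui uj by (simp add: power2_norm_eq_inner inner_add_left inner_add_right inner_commute norm_eq_1)
    consider "-1 < F$i \<bullet> F$j \<and> F$i \<bullet> F$j < 1" | "F$i \<bullet> F$j = 1" | "F$i \<bullet> F$j = -1"
      using xb by linarith
    then show ?thesis
    proof cases
      case 1
      then have g1: "-1 < gram F$i$j" "gram F$i$j < 1" using x by auto
      have pp: "pi/2 * (2/pi * P / S) = P / S" for P S :: real by simp
      have m: "(if i = j then 0 else pi/2 * mu F D i j) = (F$i \<bullet> D$j + F$j \<bullet> D$i) / sqrt (1 - (F$i \<bullet> F$j)^2)"
      proof -
        have "(if i = j then 0 else pi/2 * mu F D i j) = pi/2 * mu F D i j" using False by simp
        also have "\<dots> = pi/2 * (2/pi * (F$i \<bullet> D$j + F$j \<bullet> D$i) / sqrt (1 - (gram F$i$j)^2))"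
          by (simp only: mu_int[OF g1])
        also have "\<dots> = (F$i \<bullet> D$j + F$j \<bullet> D$i) / sqrt (1 - (gram F$i$j)^2)" by (rule pp)
        finally show ?thesis by (simp only: x)
      qed
      show ?thesis unfolding gF x m using 1 by (intro int_lim[OF ui uj oi oj]) auto
    next
      case 2
      then have fj: "F$j = F$i" using n2 by simp
      then have oij: "F$i \<bullet> D$j = 0" using oj by simp
      have m: "(if i = j then 0 else pi/2 * mu F D i j) = - norm (D$i - D$j)" using 2 False by (simp add: mu_one x)
      have a: "arcsin (gram F $i$j) = pi/2" using 2 x by simp
      show ?thesis unfolding gF a m fj by (rule bnd_lim[OF ui oi oij])
    next
      case 3
      then have "F$i + F$j = 0" using n2' by simp
      then have fj: "F$j = - F$i" by (simp add: eq_neg_iff_add_eq_0 add.commute)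
      then have oij: "F$i \<bullet> D$j = 0" using oj by simp
      have m: "(if i = j then 0 else pi/2 * mu F D i j) = norm (D$i + D$j)" using 3 False by (simp add: mu_mone x)
      have a: "gram F $i$j = -1" using 3 x by simp
      show ?thesis unfolding gF a m fj by (rule bnd_lim_neg[OF ui oi oij])
    qed
  qed
qed

theorem mainTheorem7:
  fixes Q :: "real^('n::{finite,linorder})^('n::{finite,linorder})"
    and F D :: "real^'k^('n::{finite,linorder})"
  assumes symQ: "transpose Q = Q"
    and unitF: "\<forall>i. norm (F$i) = 1"
    and orthD: "\<forall>i. F$i \<bullet> D$i = 0"
  shows "((\<lambda>t. (Phi Q F D t - Phi Q F D 0) / t) \<longlongrightarrow> GD Q F D) (at_right 0)
    \<and> (let S = tangent_space F;
           L = Gpart (\<lambda>x q. \<bar>x\<bar> < 1) Q F;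
           Cc = Gpart (\<lambda>x q. x = sgn q) Q F;
           Cv = Gpart (\<lambda>x q. x = - sgn q) Q F
       in (\<forall>E\<in>S. GD Q F E = L E + Cc E + Cv E)
        \<and> (\<forall>E1\<in>S. \<forall>E2\<in>S. \<forall>a b. L (a *\<^sub>R E1 + b *\<^sub>R E2) = a * L E1 + b * L E2)
        \<and> (\<forall>E\<in>S. Cc E \<le> 0) \<and> concave_on S Cc
        \<and> (\<forall>E\<in>S. \<forall>c\<ge>0. Cc (c *\<^sub>R E) = c * Cc E)
        \<and> (\<forall>E\<in>S. Cv E \<ge> 0) \<and> convex_on S Cv
        \<and> (\<forall>E\<in>S. \<forall>c\<ge>0. Cv (c *\<^sub>R E) = c * Cv E)
        \<and> (\<exists>g h. convex_on S g \<and> convex_on S h \<and> (\<forall>E\<in>S. GD Q F E = g E - h E)))"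
proof (rule conjI)
  show "(let S = tangent_space F;
           L = Gpart (\<lambda>x q. \<bar>x\<bar> < 1) Q F;
           Cc = Gpart (\<lambda>x q. x = sgn q) Q F;
           Cv = Gpart (\<lambda>x q. x = - sgn q) Q F
       in (\<forall>E\<in>S. GD Q F E = L E + Cc E + Cv E)
        \<and> (\<forall>E1\<in>S. \<forall>E2\<in>S. \<forall>a b. L (a *\<^sub>R E1 + b *\<^sub>R E2) = a * L E1 + b * L E2)
        \<and> (\<forall>E\<in>S. Cc E \<le> 0) \<and> concave_on S Cc
        \<and> (\<forall>E\<in>S. \<forall>c\<ge>0. Cc (c *\<^sub>R E) = c * Cc E)
        \<and> (\<forall>E\<in>S. Cv E \<ge> 0) \<and> convex_on S Cv
        \<and> (\<forall>E\<in>S. \<forall>c\<ge>0. Cv (c *\<^sub>R E) = c * Cv E)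
        \<and> (\<exists>g h. convex_on S g \<and> convex_on S h \<and> (\<forall>E\<in>S. GD Q F E = g E - h E)))"
    by (rule part2[OF unitF])
next
  have P0: "Fpath F D 0 = F" using unitF by (simp add: Fpath_def vec_eq_iff)
  define dq where "dq i j t = (arcsin (gram (Fpath F D t) $i$j) - arcsin (gram F $i$j)) / t" for i j t
  have diff: "Phi Q F D t - Phi Q F D 0
      = 2/pi * (\<Sum>i\<in>UNIV. \<Sum>j\<in>UNIV. Q$i$j * (arcsin (gram (Fpath F D t) $i$j) - arcsin (gram F $i$j)))" for t
    unfolding Phi_def P0 by (simp add: right_diff_distrib sum_subtractf)
  have quot: "(Phi Q F D t - Phi Q F D 0) / t = 2/pi * (\<Sum>i\<in>UNIV. \<Sum>j\<in>UNIV. Q$i$j * dq i j t)" for t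
  proof -
    have a: "(2/pi * S) / t = 2/pi * (S / t)" for S :: real by simp
    have b: "(\<Sum>i\<in>UNIV. \<Sum>j\<in>UNIV. Q$i$j * (arcsin (gram (Fpath F D t) $i$j) - arcsin (gram F $i$j))) / t
        = (\<Sum>i\<in>UNIV. \<Sum>j\<in>UNIV. Q$i$j * dq i j t)"
      unfolding dq_def by (simp add: sum_divide_distrib)
    show ?thesis unfolding diff a b ..
  qed
  have lim: "((\<lambda>t. 2/pi * (\<Sum>i\<in>UNIV. \<Sum>j\<in>UNIV. Q$i$j * dq i j t))
      \<longlongrightarrow> 2/pi * (\<Sum>i\<in>UNIV. \<Sum>j\<in>UNIV. Q$i$j * (if i = j then 0 else pi/2 * mu F D i j))) (at_right 0)"
    unfolding dq_def by (intro tendsto_intros term_lim[OF unitF orthD])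
  have Qs: "Q$i$j = Q$j$i" for i j
  proof -
    have "Q$i$j = (transpose Q)$i$j" using symQ by simp
    then show ?thesis by (simp add: transpose_def)
  qed
  have "2/pi * (\<Sum>i\<in>UNIV. \<Sum>j\<in>UNIV. Q$i$j * (if i = j then 0 else pi/2 * mu F D i j))
      = (\<Sum>i\<in>UNIV. \<Sum>j\<in>UNIV. if i = j then 0 else Q$i$j * mu F D i j)"
    unfolding sum_distrib_left by (intro sum.cong refl) auto
  also have "\<dots> = 2 * (\<Sum>(i,j)\<in>{(i,j). i<j}. Q$i$j * mu F D i j)"
    by (rule sym_sum) (simp add: Qs mu_sym[of F D])
  also have "\<dots> = GD Q F D" by (simp add: GD_def)
  finally have val: "2/pi * (\<Sum>i\<in>UNIV. \<Sum>j\<in>UNIV. Q$i$j * (if i = j then 0 else pi/2 * mu F D i j)) = GD Q F D" .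
  show "((\<lambda>t. (Phi Q F D t - Phi Q F D 0) / t) \<longlongrightarrow> GD Q F D) (at_right 0)"
    unfolding quot using lim val by simp
qed

end
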